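(* Let $k \geq 3$ and $D \geq 1$ be integers. For each integer $n \geq 1$, let $R_{k,D}(n)$ denote the largest size of a subset $S \subseteq [n] := \{1,2,\dots,n\}$ that contains no subset of the form $\{i, i+d, i+2d, \dots, i+(k-1)d\}$ with $i \geq 1$ and $1 \leq d \leq D$. Then there exists a rational number $\alpha_{k,D}$ such that $$\lim_{n \to \infty} \frac{R_{k,D}(n)}{n} = \alpha_{k,D}.$$ *)

theory Defs
  imports Complex_Main
begin

definition ap_free :: "nat \<Rightarrow> nat \<Rightarrow> nat set \<Rightarrow> bool" where
  "ap_free k D S \<longleftrightarrow>
     \<not> (\<exists>i d. i \<ge> 1 \<and> 1 \<le> d \<and> d \<le> D \<and> {i + j * d | j. j < k} \<subseteq> S)"

definition R :: "nat \<Rightarrow> nat \<Rightarrow> nat \<Rightarrow> nat" where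
  "R k D n = Max {card S | S. S \<subseteq> {1..n} \<and> ap_free k D S}"

end

theory Submission
  imports Defs
begin

definition cyc_free :: "nat \<Rightarrow> nat \<Rightarrow> nat \<Rightarrow> nat set \<Rightarrow> bool" where
  "cyc_free k D p A \<longleftrightarrow>
     \<not> (\<exists>i d. 1 \<le> d \<and> d \<le> D \<and> (\<forall>j<k. (i + j * d) mod p \<in> A))"

lemma mod_inj_interval:
  fixes x y t p :: nat
  assumes "t \<le> x" "x < t + p" "t \<le> y" "y < t + p" "x mod p = y mod p"
  shows "x = y"
proof (rule ccontr)
  assume ne: "x \<noteq> y"
  { fix a b :: nat assume ab: "a < b" "t \<le> a" "b < t + p" "a mod p = b mod p"
    then have "p dvd b - a" using mod_eq_dvd_iff_nat[of a b p] by simp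
    moreover have "b - a < p" "b - a > 0" using ab by auto
    ultimately have False using nat_dvd_not_less by blast }
  then show False using assms ne by (metis linorder_neqE_nat)
qed

lemma lower_set:
  assumes cf: "cyc_free k D p A" and p: "p \<ge> 1" and A: "A \<subseteq> {..<p}"
  shows "ap_free k D {x\<in>{1..n}. (x - 1) mod p \<in> A}"
    and "(n div p) * card A \<le> card {x\<in>{1..n}. (x - 1) mod p \<in> A}"
proof -
  show "ap_free k D {x\<in>{1..n}. (x - 1) mod p \<in> A}"
    unfolding ap_free_def
  proof
    assume "\<exists>i d. i \<ge> 1 \<and> 1 \<le> d \<and> d \<le> D \<and> {i + j * d | j. j < k} \<subseteq> {x\<in>{1..n}. (x - 1) mod p \<in> A}"
    then obtain i d where h: "i \<ge> 1" "1 \<le> d" "d \<le> D"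
      "{i + j * d | j. j < k} \<subseteq> {x\<in>{1..n}. (x - 1) mod p \<in> A}" by blast
    have "\<forall>j<k. ((i - 1) + j * d) mod p \<in> A"
    proof (intro allI impI)
      fix j assume "j < k"
      then have "i + j * d \<in> {x\<in>{1..n}. (x - 1) mod p \<in> A}" using h(4) by blast
      moreover have "i + j * d - 1 = (i - 1) + j * d" using h(1) by simp
      ultimately show "((i - 1) + j * d) mod p \<in> A" by simp
    qed
    then show False using cf h unfolding cyc_free_def by blast
  qed
  define m where "m = n div p"
  define f where "f = (\<lambda>(q, r). q * p + r + (1::nat))"
  have sub: "f ` ({..<m} \<times> A) \<subseteq> {x\<in>{1..n}. (x - 1) mod p \<in> A}"
  proof
    fix x assume "x \<in> f ` ({..<m} \<times> A)"
    then obtain q r where qr: "q < m" "r \<in> A" "x = q * p + r + 1" unfolding f_def by auto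
    have rp: "r < p" using qr A by auto
    have "q * p + r + 1 \<le> Suc q * p" using rp by simp
    also have "\<dots> \<le> m * p" using qr(1) by (intro mult_le_mono1) simp
    also have "\<dots> \<le> n" unfolding m_def by simp
    finally have "x \<le> n" using qr by simp
    moreover have "(x - 1) mod p = r" using qr rp by simp
    ultimately show "x \<in> {x\<in>{1..n}. (x - 1) mod p \<in> A}" using qr by simp
  qed
  have inj: "inj_on f ({..<m} \<times> A)"
  proof (rule inj_onI)
    fix a b assume a: "a \<in> {..<m} \<times> A" and b: "b \<in> {..<m} \<times> A" and e: "f a = f b"
    obtain q r where aq: "a = (q, r)" by force
    obtain q' r' where bq: "b = (q', r')" by force
    have "r < p" "r' < p" using a b aq bq A by auto
    moreover have "q * p + r = q' * p + r'" using e aq bq unfolding f_def by simp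
    moreover have "p > 0" using p by simp
    ultimately have e2: "q * p + r = q' * p + r'" "r < p" "r' < p" by auto
    have m1: "(q * p + r) mod p = r" "(q' * p + r') mod p = r'" using e2(2,3) by simp_all
    have d1: "(q * p + r) div p = q" "(q' * p + r') div p = q'" using e2(2,3) by simp_all
    have "r = r'" "q = q'" using m1 d1 e2(1) by metis+
    then show "a = b" using aq bq by simp
  qed
  have fin: "finite {x\<in>{1..n}. (x - 1) mod p \<in> A}" by simp
  have "card (f ` ({..<m} \<times> A)) = m * card A"
    using inj card_image[OF inj] by (simp add: card_cartesian_product)
  then show "(n div p) * card A \<le> card {x\<in>{1..n}. (x - 1) mod p \<in> A}"
    using card_mono[OF fin sub] unfolding m_def by simp
qed


lemma upper:
  fixes k D N :: nat and \<beta> :: real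
  assumes NL: "N = 2 ^ ((k-1)*D) + 1" and b0: "\<beta> \<ge> 0"
    and bnd: "\<And>p A. 1 \<le> p \<Longrightarrow> p \<le> N \<Longrightarrow> A \<subseteq> {..<p} \<Longrightarrow> cyc_free k D p A \<Longrightarrow> real (card A) \<le> \<beta> * real p"
  shows "S \<subseteq> {1..n} \<Longrightarrow> ap_free k D S \<Longrightarrow> real (card S) \<le> \<beta> * real n + real N"
proof (induction n arbitrary: S rule: less_induct)
  case (less n S)
  define L where "L = (k-1)*D"
  have finS: "finite S" using less.prems(1) finite_subset by blast
  show ?case
  proof (cases "n < N")
    case True
    have "card S \<le> n" using card_mono[OF _ less.prems(1)] by simp
    then have "real (card S) \<le> real N" using True by simp
    moreover have "\<beta> * real n \<ge> 0" using b0 by simp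
    ultimately show ?thesis by linarith
  next
    case False
    define pat where "pat t = {j. j < L \<and> t + j \<in> S}" for t
    have "pat ` {1..N} \<subseteq> Pow {..<L}" by (auto simp: pat_def)
    then have "card (pat ` {1..N}) \<le> card (Pow {..<L})" by (intro card_mono) auto
    also have "\<dots> = 2 ^ L" by (simp add: card_Pow)
    finally have "\<not> inj_on pat {1..N}" using NL L_def by (intro pigeonhole) simp
    then obtain u v where uv: "u \<in> {1..N}" "v \<in> {1..N}" "u \<noteq> v" "pat u = pat v"
      unfolding inj_on_def by blast
    obtain t1 t2 where t: "1 \<le> t1" "t1 < t2" "t2 \<le> N" "pat t1 = pat t2"
      using uv by (metis atLeastAtMost_iff linorder_neqE_nat)
    have patj: "t1 + j \<in> S \<longleftrightarrow> t2 + j \<in> S" if "j < L" for j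
    proof -
      from t(4) have "j \<in> pat t1 \<longleftrightarrow> j \<in> pat t2" by simp
      then show ?thesis using that by (simp add: pat_def)
    qed
    have nN: "N \<le> n" using False by simp
    define p where "p = t2 - t1"
    have p1: "1 \<le> p" "p \<le> N" "p \<le> n" "t2 = t1 + p" using t False by (auto simp: p_def)
    define M where "M = {x\<in>S. t1 \<le> x \<and> x < t2}"
    define A where "A = (\<lambda>x. x mod p) ` M"
    have inj: "inj_on (\<lambda>x. x mod p) {t1..<t2}"
    proof (rule inj_onI)
      fix x y assume "x \<in> {t1..<t2}" "y \<in> {t1..<t2}" "x mod p = y mod p"
      then show "x = y" using mod_inj_interval[of t1 x p y] p1(4) by simp
    qed
    have img: "(\<lambda>x. x mod p) ` {t1..<t2} = {..<p}"
    proof (rule card_subset_eq)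
      show "(\<lambda>x. x mod p) ` {t1..<t2} \<subseteq> {..<p}" using p1 by auto
      show "card ((\<lambda>x. x mod p) ` {t1..<t2}) = card {..<p}"
        using card_image[OF inj] p1(4) by simp
    qed simp
    have cardA: "card A = card M" unfolding A_def
      by (rule card_image, rule inj_on_subset[OF inj]) (auto simp: M_def)
    have Asub: "A \<subseteq> {..<p}" using p1 by (auto simp: A_def)
    have key: "t1 \<le> x \<Longrightarrow> x < t2 + L \<Longrightarrow> (x \<in> S \<longleftrightarrow> x mod p \<in> A)" for x
    proof (induction x rule: less_induct)
      case (less x)
      show ?case
      proof (cases "x < t2")
        case True
        show ?thesis
        proof
          assume "x \<in> S" then show "x mod p \<in> A" using less.prems True by (auto simp: A_def M_def)
        next
          assume "x mod p \<in> A"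
          then obtain y where y: "y \<in> S" "t1 \<le> y" "y < t2" "y mod p = x mod p" by (auto simp: A_def M_def)
          then have "y = x" using mod_inj_interval[of t1 y p x] less.prems True p1(4) by simp
          then show "x \<in> S" using y by simp
        qed
      next
        case False
        define j where "j = x - t2"
        have j: "j < L" "x = t2 + j" using False less.prems by (auto simp: j_def)
        have "x \<in> S \<longleftrightarrow> t1 + j \<in> S" using patj[OF j(1)] j(2) by simp
        also have "\<dots> \<longleftrightarrow> (t1+j) mod p \<in> A" using less.IH[of "t1+j"] j p1 less.prems by auto
        also have "(t1 + j) mod p = x mod p"
        proof -
          have "x = (t1 + j) + p" using j p1(4) by simp
          then show ?thesis by simp
        qed
        finally show ?thesis .
      qed
    qed
    have cf: "cyc_free k D p A"
      unfolding cyc_free_def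
    proof
      assume "\<exists>i d. 1 \<le> d \<and> d \<le> D \<and> (\<forall>j<k. (i + j*d) mod p \<in> A)"
      then obtain i d where h: "1 \<le> d" "d \<le> D" "\<forall>j<k. (i + j*d) mod p \<in> A" by blast
      have "i mod p \<in> (\<lambda>x. x mod p) ` {t1..<t2}" using img p1 by simp
      then obtain i' where i': "t1 \<le> i'" "i' < t2" "i' mod p = i mod p" by auto
      have "{i' + j*d | j. j<k} \<subseteq> S"
      proof
        fix x assume "x \<in> {i' + j*d | j. j<k}"
        then obtain j where j: "j < k" "x = i' + j*d" by blast
        have "j*d \<le> (k-1)*D" using j h by (intro mult_le_mono) auto
        then have "x < t2 + L" using j i' L_def by simp
        moreover have "x mod p = (i + j*d) mod p" using j i' by (metis mod_add_left_eq)
        ultimately show "x \<in> S" using key[of x] h j i' by auto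
      qed
      moreover have "i' \<ge> 1" using i' t by simp
      ultimately show False using less.prems(2) h unfolding ap_free_def by blast
    qed
    have cM: "real (card M) \<le> \<beta> * real p" using bnd[OF p1(1) p1(2) Asub cf] cardA by simp
    define S1 where "S1 = {x\<in>S. x < t1}"
    define S3 where "S3 = {x\<in>S. t2 \<le> x}"
    define S' where "S' = S1 \<union> (\<lambda>x. x - p) ` S3"
    have memlow: "x \<in> S' \<longleftrightarrow> x \<in> S" if "x < t1" for x
      using that p1(4) unfolding S'_def S1_def S3_def by auto
    have memhigh: "x \<in> S' \<longleftrightarrow> x + p \<in> S" if "t1 \<le> x" for x
    proof
      assume "x \<in> S'" then show "x + p \<in> S" using that p1(4) unfolding S'_def S1_def S3_def by auto
    next
      assume "x + p \<in> S"
      then have "x + p \<in> S3" using that p1(4) unfolding S3_def by simp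
      then show "x \<in> S'" unfolding S'_def by (intro UnI2 rev_image_eqI[where x="x+p"]) auto
    qed
    have S'sub: "S' \<subseteq> {1..n-p}"
    proof
      fix x assume x: "x \<in> S'"
      show "x \<in> {1..n-p}"
      proof (cases "x \<in> S1")
        case True
        then have "x \<in> S" "x < t1" by (auto simp: S1_def)
        then show ?thesis using less.prems(1) p1 t nN by auto
      next
        case False
        then obtain y where y: "y \<in> S" "t2 \<le> y" "x = y - p" using x by (auto simp: S'_def S3_def)
        have "y \<le> n" using y less.prems(1) by auto
        then show ?thesis using y p1 t by auto
      qed
    qed
    have apS': "ap_free k D S'"
      unfolding ap_free_def
    proof
      assume "\<exists>i d. i \<ge> 1 \<and> 1 \<le> d \<and> d \<le> D \<and> {i + j*d | j. j < k} \<subseteq> S'"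
      then obtain i d where h: "i \<ge> 1" "1 \<le> d" "d \<le> D" "{i + j*d | j. j < k} \<subseteq> S'" by blast
      have mem: "i + j*d \<in> S'" if "j < k" for j using h(4) that by blast
      show False
      proof (cases "t1 \<le> i")
        case True
        have "{(i+p) + j*d | j. j<k} \<subseteq> S"
        proof
          fix x assume "x \<in> {(i+p) + j*d | j. j<k}"
          then obtain j where j: "j < k" "x = (i+p) + j*d" by blast
          have "i + j*d + p \<in> S" using memhigh[of "i + j*d"] mem[OF j(1)] True by simp
          then show "x \<in> S" using j by (simp add: algebra_simps)
        qed
        moreover have "i + p \<ge> 1" using h by simp
        ultimately show False using less.prems(2) h unfolding ap_free_def by blast
      next
        case False
        have "{i + j*d | j. j<k} \<subseteq> S"
        proof
          fix x assume "x \<in> {i + j*d | j. j<k}"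
          then obtain j where j: "j < k" "x = i + j*d" by blast
          have "j*d \<le> (k-1)*D" using j h by (intro mult_le_mono) auto
          then have xl: "x < t1 + L" using j False L_def by simp
          show "x \<in> S"
          proof (cases "x < t1")
            case True then show ?thesis using memlow mem j by auto
          next
            case False
            then have "x + p \<in> S" using memhigh[of x] mem[OF j(1)] j(2) by simp
            moreover have "x + p = t2 + (x - t1)" "x - t1 < L" using False p1(4) xl by auto
            ultimately show ?thesis using patj[of "x - t1"] False by simp
          qed
        qed
        then show False using less.prems(2) h unfolding ap_free_def by blast
      qed
    qed
    have IH: "real (card S') \<le> \<beta> * real (n-p) + real N"
      using less.IH[of "n-p" S'] S'sub apS' p1 False t by simp
    have fin1: "finite S1" "finite M" "finite S3" using finS by (auto simp: S1_def M_def S3_def)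
    have eqS: "S = (S1 \<union> M) \<union> S3" using p1 by (auto simp: S1_def M_def S3_def)
    have d1: "S1 \<inter> M = {}" "(S1 \<union> M) \<inter> S3 = {}" using p1 by (auto simp: S1_def M_def S3_def)
    have c1: "card ((S1 \<union> M) \<union> S3) = card (S1 \<union> M) + card S3"
      using fin1 d1 by (intro card_Un_disjoint) auto
    have c2: "card (S1 \<union> M) = card S1 + card M" using fin1 d1 by (intro card_Un_disjoint) auto
    have cS: "card S = card S1 + card M + card S3" using c1 c2 eqS by simp
    have inj3: "inj_on (\<lambda>x. x - p) S3"
      by (rule inj_onI) (use p1 in \<open>auto simp: S3_def\<close>)
    have disj: "S1 \<inter> (\<lambda>x. x - p) ` S3 = {}" using p1 by (auto simp: S1_def S3_def)
    have cS': "card S' = card S1 + card S3"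
      unfolding S'_def using fin1 disj card_image[OF inj3] by (simp add: card_Un_disjoint)
    have "real (card S) = real (card S') + real (card M)" using cS cS' by simp
    also have "\<dots> \<le> \<beta> * real (n-p) + real N + \<beta> * real p" using IH cM by simp
    also have "\<dots> = \<beta> * real n + real N" using p1 by (simp add: of_nat_diff algebra_simps)
    finally show ?thesis .
  qed
qed


theorem mainTheorem1:
  fixes k D :: nat
  assumes "k \<ge> 3" and "D \<ge> 1"
  shows "\<exists>\<alpha> :: real. \<alpha> \<in> \<rat> \<and> (\<lambda>n. real (R k D n) / real n) \<longlonglongrightarrow> \<alpha>"
proof -
  define N where "N = 2 ^ ((k-1)*D) + (1::nat)"
  define F where "F = {(p,A). 1 \<le> p \<and> p \<le> N \<and> A \<subseteq> {..<p} \<and> cyc_free k D p A}"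
  define V where "V = (\<lambda>(p,A). real (card A) / real p) ` F"
  have k1: "k \<ge> 1" using assms by simp
  have e: "(1, {}) \<in> F" using k1 unfolding F_def cyc_free_def N_def by (auto intro: exI[where x=0])
  have "F \<subseteq> {..N} \<times> Pow {..<N}" unfolding F_def by auto
  then have finF: "finite F" by (rule finite_subset) auto
  have finV: "finite V" "V \<noteq> {}" using finF e unfolding V_def by auto
  define \<beta> where "\<beta> = Max V"
  have "\<beta> \<in> V" using finV unfolding \<beta>_def by (rule Max_in)
  then obtain p0 A0 where pA0: "(p0, A0) \<in> F" "\<beta> = real (card A0) / real p0"
    unfolding V_def by auto
  have ge: "real (card A) / real p \<le> \<beta>" if "(p, A) \<in> F" for p A
    using finV that unfolding \<beta>_def V_def by (intro Max_ge) force+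
  have b0: "\<beta> \<ge> 0" using ge[OF e] by simp
  have bnd: "real (card A) \<le> \<beta> * real p"
    if "1 \<le> p" "p \<le> N" "A \<subseteq> {..<p}" "cyc_free k D p A" for p A
  proof -
    have "real (card A) / real p \<le> \<beta>" using ge that unfolding F_def by auto
    then show ?thesis using that by (simp add: divide_le_eq mult.commute)
  qed
  have rat: "\<beta> \<in> \<rat>" using pA0 by simp
  have finR: "finite {card S | S. S \<subseteq> {1..n} \<and> ap_free k D S}" for n
  proof -
    have "{card S | S. S \<subseteq> {1..n} \<and> ap_free k D S} \<subseteq> card ` Pow {1..n}" by auto
    then show ?thesis by (rule finite_subset) auto
  qed
  have ub: "real (R k D n) \<le> \<beta> * real n + real N" for n
  proof -
    have "ap_free k D {}" using k1 unfolding ap_free_def by (auto dest: spec[where x=0])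
    then have "{card S | S. S \<subseteq> {1..n} \<and> ap_free k D S} \<noteq> {}" by auto
    then have "R k D n \<in> {card S | S. S \<subseteq> {1..n} \<and> ap_free k D S}"
      unfolding R_def using finR by (intro Max_in) auto
    then obtain S where S: "S \<subseteq> {1..n}" "ap_free k D S" "R k D n = card S" by auto
    show ?thesis using upper[OF N_def b0 bnd S(1,2)] S(3) by simp
  qed
  have lb: "\<beta> * real n - real N \<le> real (R k D n)" for n
  proof -
    define T where "T = {x\<in>{1..n}. (x - 1) mod p0 \<in> A0}"
    have p0: "1 \<le> p0" "p0 \<le> N" "A0 \<subseteq> {..<p0}" "cyc_free k D p0 A0" using pA0 unfolding F_def by auto
    have "ap_free k D T" unfolding T_def using lower_set(1)[OF p0(4) p0(1) p0(3)] .
    have "T \<subseteq> {1..n}" unfolding T_def by auto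
    have "card T \<le> R k D n" unfolding R_def
      using finR \<open>ap_free k D T\<close> \<open>T \<subseteq> {1..n}\<close> by (intro Max_ge) auto
    moreover have cT: "(n div p0) * card A0 \<le> card T" unfolding T_def using lower_set(2)[OF p0(4) p0(1) p0(3)] .
    define q where "q = n div p0"
    define c where "c = card A0"
    have cle: "c \<le> N"
    proof -
      have "c \<le> card {..<p0}" unfolding c_def using p0(3) by (intro card_mono) auto
      then show ?thesis using p0 by simp
    qed
    have "n = q * p0 + n mod p0" unfolding q_def by simp
    moreover have "n mod p0 < p0" using p0 by simp
    ultimately have "n \<le> q * p0 + p0" by linarith
    then have nr: "real n \<le> real q * real p0 + real p0" by (metis of_nat_add of_nat_le_iff of_nat_mult)
    have "\<beta> * real n \<le> \<beta> * (real q * real p0 + real p0)" using nr b0 by (intro mult_left_mono)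
    also have "\<dots> = real q * real c + real c" using pA0 p0 unfolding c_def by (simp add: field_simps)
    finally have "\<beta> * real n - real N \<le> real q * real c" using cle by simp
    also have "\<dots> \<le> real (card T)" using cT unfolding q_def c_def by (metis of_nat_le_iff of_nat_mult)
    also have "\<dots> \<le> real (R k D n)" using calculation \<open>card T \<le> R k D n\<close> by simp
    finally show ?thesis .
  qed
  have "(\<lambda>n. real (R k D n) / real n) \<longlonglongrightarrow> \<beta>"
  proof (rule tendsto_sandwich)
    show "\<forall>\<^sub>F n in sequentially. \<beta> - real N / real n \<le> real (R k D n) / real n"
      unfolding eventually_sequentially
    proof (intro exI allI impI)
      fix n :: nat assume "n \<ge> 1"
      then have "real n > 0" by simp
      then have "\<beta> - real N / real n = (\<beta> * real n - real N) / real n" by (simp add: field_simps)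
      also have "\<dots> \<le> real (R k D n) / real n" using lb[of n] \<open>real n > 0\<close> by (intro divide_right_mono) auto
      finally show "\<beta> - real N / real n \<le> real (R k D n) / real n" .
    qed
    show "\<forall>\<^sub>F n in sequentially. real (R k D n) / real n \<le> \<beta> + real N / real n"
      unfolding eventually_sequentially
    proof (intro exI allI impI)
      fix n :: nat assume "n \<ge> 1"
      then have "real n > 0" by simp
      then have "\<beta> + real N / real n = (\<beta> * real n + real N) / real n" by (simp add: field_simps)
      moreover have "real (R k D n) / real n \<le> (\<beta> * real n + real N) / real n" using ub[of n] \<open>real n > 0\<close> by (intro divide_right_mono) auto
      ultimately show "real (R k D n) / real n \<le> \<beta> + real N / real n" by simp
    qed
    have "(\<lambda>n. \<beta> - real N / real n) \<longlonglongrightarrow> \<beta> - 0"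
      by (intro tendsto_intros)
    then show "(\<lambda>n. \<beta> - real N / real n) \<longlonglongrightarrow> \<beta>" by simp
    have "(\<lambda>n. \<beta> + real N / real n) \<longlonglongrightarrow> \<beta> + 0"
      by (intro tendsto_intros)
    then show "(\<lambda>n. \<beta> + real N / real n) \<longlonglongrightarrow> \<beta>" by simp
  qed
  then show ?thesis using rat by blast
qed

end
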